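(* Let $(Y_i)_{i\ge1}$ be i.i.d. random variables taking non-negative integer values, and suppose $\mathbb{E}[Y_i^c]\le1$ for some constant $c\ge0$. Let $M=\sup_{j\ge0}\prod_{1\le i\le j}Y_i$ (the empty product being $1$). Then for every $A>0$, \[ \mathbb{P}[M\ge A]\le A^{-c}. \] *)

theory Defs
  imports "HOL-Probability.Probability"
begin

text \<open>Supremum of the partial products (empty product = 1), valued in ennreal since it may be infinite.\<close>
definition sup_prod :: "(nat \<Rightarrow> 'a \<Rightarrow> nat) \<Rightarrow> 'a \<Rightarrow> ennreal" where
  "sup_prod Y x = (SUP j. ennreal (\<Prod>i\<in>{1..j}. real (Y i x)))"

end

theory Submission
  imports Defs
begin

lemma (in prob_space) indep_var_nn_integral2:
  fixes X1 X2 :: "'a \<Rightarrow> ennreal"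
  assumes "indep_var borel X1 borel X2"
  shows "(\<integral>\<^sup>+\<omega>. X1 \<omega> * X2 \<omega> \<partial>M) = (\<integral>\<^sup>+\<omega>. X1 \<omega> \<partial>M) * (\<integral>\<^sup>+\<omega>. X2 \<omega> \<partial>M)"
proof -
  have *: "(\<lambda>\<omega>. X1 \<omega> * X2 \<omega>) = (\<lambda>\<omega>. \<Prod>i\<in>UNIV. (case_bool X1 X2 i \<omega>))"
    by (simp add: UNIV_bool mult.commute)
  have **: "(\<lambda> _. borel) = case_bool borel borel"
    by (rule ext, metis (full_types) bool.simps(3) bool.simps(4))
  have ind: "indep_vars (\<lambda>_. borel) (case_bool X1 X2) UNIV"
    using assms unfolding indep_var_def by (subst **) 
  show ?thesis
    apply (subst *)
    apply (subst indep_vars_nn_integral[OF _ ind])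
    by (auto simp: UNIV_bool mult.commute)
qed

fun Qf :: "real \<Rightarrow> nat \<Rightarrow> (nat \<Rightarrow> nat) \<Rightarrow> real" where
  "Qf A 0 y = 1"
| "Qf A (Suc n) y = (if Qf A n y \<ge> A then Qf A n y else Qf A n y * real (y (Suc n)))"

definition Pf :: "nat \<Rightarrow> (nat \<Rightarrow> nat) \<Rightarrow> real" where
  "Pf n y = (\<Prod>i\<in>{1..n}. real (y i))"

lemma Qf_inv: "Qf A n y \<ge> A \<or> (Qf A n y = Pf n y \<and> (\<forall>j\<le>n. Pf j y < A))"
proof (induction n)
  case 0
  then show ?case by (auto simp: Pf_def)
next
  case (Suc n)
  have PS: "Pf (Suc n) y = Pf n y * real (y (Suc n))"
    by (simp add: Pf_def)
  show ?case
  proof (cases "Qf A n y \<ge> A")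
    case True then show ?thesis by simp
  next
    case False
    with Suc have e: "Qf A n y = Pf n y" and lt: "\<forall>j\<le>n. Pf j y < A" by auto
    show ?thesis
    proof (cases "Qf A (Suc n) y \<ge> A")
      case False
      then have "Pf (Suc n) y < A" using e \<open>\<not> A \<le> Qf A n y\<close> PS by auto
      then show ?thesis using e \<open>\<not> A \<le> Qf A n y\<close> PS lt le_Suc_eq by auto
    qed simp
  qed
qed

lemma Qf_ge: "j \<le> n \<Longrightarrow> Pf j y \<ge> A \<Longrightarrow> Qf A n y \<ge> A"
  using Qf_inv[of A n y] by force

lemma Qf_nonneg: "Qf A n y \<ge> 0"
  by (induction n) auto

lemma Qf_cong: "(\<And>i. i \<in> {1..n} \<Longrightarrow> y i = z i) \<Longrightarrow> Qf A n y = Qf A n z"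
  by (induction n) auto

lemma Qf_meas: "m \<le> n \<Longrightarrow> (\<lambda>f. Qf A m f) \<in> borel_measurable (PiM {1..n} (\<lambda>_. count_space UNIV))"
proof (induction m)
  case 0 then show ?case by simp
next
  case (Suc m)
  then have IH[measurable]: "(\<lambda>f. Qf A m f) \<in> borel_measurable (PiM {1..n} (\<lambda>_. count_space UNIV))" by simp
  have [measurable]: "(\<lambda>f. f (Suc m)) \<in> measurable (PiM {1..n} (\<lambda>_. count_space UNIV)) (count_space UNIV)"
    using Suc.prems by (intro measurable_component_singleton) auto
  show ?case unfolding Qf.simps by measurable
qed

theorem lemma4p1:
  fixes M :: "'a measure" and Y :: "nat \<Rightarrow> 'a \<Rightarrow> nat" and c A :: real
  assumes "prob_space M"
    and meas: "\<And>i. i \<ge> 1 \<Longrightarrow> Y i \<in> measurable M (count_space UNIV)"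
    and indep: "prob_space.indep_vars M (\<lambda>_. count_space UNIV) Y {1..}"
    and ident: "\<And>i. i \<ge> 1 \<Longrightarrow> distr M (count_space UNIV) (Y i) = distr M (count_space UNIV) (Y 1)"
    and "c \<ge> 0"
    and moment: "(\<integral>\<^sup>+ x. ennreal (if c = 0 then 1 else real (Y 1 x) powr c) \<partial>M) \<le> 1"
    and "A > 0"
  shows "measure M {x \<in> space M. sup_prod Y x \<ge> ennreal A} \<le> A powr (- c)"
proof -
  interpret P: prob_space M by fact
  show ?thesis
  proof (cases "c = 0")
    case True
    then show ?thesis using \<open>A > 0\<close> P.prob_le_1 by simp
  next
    case False
    then have cpos: "c > 0" using \<open>c \<ge> 0\<close> by simp
    have mom1: "(\<integral>\<^sup>+ x. ennreal (real (Y 1 x) powr c) \<partial>M) \<le> 1"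
      using moment False by simp
    have hmom: "(\<integral>\<^sup>+ x. ennreal (real (Y (Suc n) x) powr c) \<partial>M) \<le> 1" for n
    proof -
      have "(\<integral>\<^sup>+ x. ennreal (real (Y (Suc n) x) powr c) \<partial>M)
          = (\<integral>\<^sup>+ y. ennreal (real y powr c) \<partial>distr M (count_space UNIV) (Y (Suc n)))"
        by (subst nn_integral_distr) (auto intro: meas)
      also have "\<dots> = (\<integral>\<^sup>+ y. ennreal (real y powr c) \<partial>distr M (count_space UNIV) (Y 1))"
        using ident[of "Suc n"] by simp
      also have "\<dots> = (\<integral>\<^sup>+ x. ennreal (real (Y 1 x) powr c) \<partial>M)"
        by (subst nn_integral_distr) (auto intro: meas)
      finally show ?thesis using mom1 by simp
    qed
    define q where "q n x = Qf A n (\<lambda>i. Y i x)" for n x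
    have qr: "q n x = Qf A n (restrict (\<lambda>i. Y i x) {1..n})" for n x
      unfolding q_def by (rule Qf_cong) simp
    have rmeas: "(\<lambda>x. restrict (\<lambda>i. Y i x) I) \<in> measurable M (PiM I (\<lambda>_. count_space UNIV))"
      if "I \<subseteq> {1..}" for I
      using that by (intro measurable_restrict meas) auto
    have qmeas[measurable]: "(\<lambda>x. q n x) \<in> borel_measurable M" for n
      unfolding qr
      by (rule measurable_compose[OF rmeas Qf_meas]) auto
    have key: "(\<integral>\<^sup>+ x. ennreal (q n x powr c) \<partial>M) \<le> 1" for n
    proof (induction n)
      case 0
      then show ?case by (simp add: q_def P.emeasure_space_1)
    next
      case (Suc n)
      define g where "g x = ennreal (q n x powr c)" for x
      define a where "a x = (if A \<le> q n x then 1 else 0 :: ennreal)" for x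
      define b where "b x = (if A \<le> q n x then 0 else 1 :: ennreal)" for x
      define h where "h x = ennreal (real (Y (Suc n) x) powr c)" for x
      have [measurable]: "g \<in> borel_measurable M" "a \<in> borel_measurable M" "b \<in> borel_measurable M"
        unfolding g_def a_def b_def by measurable
      have [measurable]: "h \<in> borel_measurable M"
        unfolding h_def using meas[of "Suc n"] by measurable
      have pt: "ennreal (q (Suc n) x powr c) = g x * a x + (g x * b x) * h x" for x
      proof (cases "A \<le> q n x")
        case True
        then show ?thesis by (simp add: q_def g_def a_def b_def)
      next
        case False
        have "q (Suc n) x = q n x * real (Y (Suc n) x)" using False by (simp add: q_def)
        then have "q (Suc n) x powr c = q n x powr c * real (Y (Suc n) x) powr c"
          by (simp add: powr_mult q_def Qf_nonneg)
        then show ?thesis using False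
          by (simp add: g_def a_def b_def h_def ennreal_mult'' )
      qed
      have ind0: "P.indep_var (PiM {1..n} (\<lambda>_. count_space UNIV)) (\<lambda>\<omega>. restrict (\<lambda>i. Y i \<omega>) {1..n})
          (PiM {Suc n} (\<lambda>_. count_space UNIV)) (\<lambda>\<omega>. restrict (\<lambda>i. Y i \<omega>) {Suc n})"
        by (rule P.indep_var_restrict[OF indep]) auto
      define \<phi> where "\<phi> f = ennreal (Qf A n f powr c) * (if A \<le> Qf A n f then 0 else 1)" for f
      define \<psi> where "\<psi> f = ennreal (real (f (Suc n)) powr c)" for f :: "nat \<Rightarrow> nat"
      have [measurable]: "(\<lambda>f. Qf A n f) \<in> borel_measurable (PiM {1..n} (\<lambda>_. count_space UNIV))"
        by (rule Qf_meas) simp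
      have m1: "\<phi> \<in> borel_measurable (PiM {1..n} (\<lambda>_. count_space UNIV))"
        unfolding \<phi>_def by measurable
      have [measurable]: "(\<lambda>f. f (Suc n)) \<in> measurable (PiM {Suc n} (\<lambda>_. count_space UNIV)) (count_space UNIV)"
        by (intro measurable_component_singleton) auto
      have m2: "\<psi> \<in> borel_measurable (PiM {Suc n} (\<lambda>_. count_space UNIV))"
        unfolding \<psi>_def by measurable
      have ind1: "P.indep_var borel (\<phi> \<circ> (\<lambda>\<omega>. restrict (\<lambda>i. Y i \<omega>) {1..n})) borel (\<psi> \<circ> (\<lambda>\<omega>. restrict (\<lambda>i. Y i \<omega>) {Suc n}))"
        by (rule P.indep_var_compose[OF ind0 m1 m2])
      have e1: "\<phi> \<circ> (\<lambda>\<omega>. restrict (\<lambda>i. Y i \<omega>) {1..n}) = (\<lambda>x. g x * b x)"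
        by (auto simp: \<phi>_def g_def b_def qr fun_eq_iff)
      have e2: "\<psi> \<circ> (\<lambda>\<omega>. restrict (\<lambda>i. Y i \<omega>) {Suc n}) = h"
        by (auto simp: \<psi>_def h_def fun_eq_iff)
      have ind2: "P.indep_var borel (\<lambda>x. g x * b x) borel h"
        using ind1 unfolding e1 e2 .
      have "(\<integral>\<^sup>+ x. ennreal (q (Suc n) x powr c) \<partial>M) = (\<integral>\<^sup>+ x. g x * a x + (g x * b x) * h x \<partial>M)"
        by (simp add: pt)
      also have "\<dots> = (\<integral>\<^sup>+ x. g x * a x \<partial>M) + (\<integral>\<^sup>+ x. (g x * b x) * h x \<partial>M)"
        by (rule nn_integral_add) auto
      also have "(\<integral>\<^sup>+ x. (g x * b x) * h x \<partial>M) = (\<integral>\<^sup>+ x. g x * b x \<partial>M) * (\<integral>\<^sup>+ x. h x \<partial>M)"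
        by (rule P.indep_var_nn_integral2[OF ind2])
      also have "\<dots> \<le> (\<integral>\<^sup>+ x. g x * b x \<partial>M) * 1"
        by (rule mult_left_mono) (use hmom[of n] in \<open>auto simp: h_def\<close>)
      also have "(\<integral>\<^sup>+ x. g x * a x \<partial>M) + (\<integral>\<^sup>+ x. g x * b x \<partial>M) * 1 = (\<integral>\<^sup>+ x. g x * a x + g x * b x \<partial>M)"
        by (simp, rule nn_integral_add[symmetric]) auto
      also have "\<dots> = (\<integral>\<^sup>+ x. g x \<partial>M)"
        by (auto simp: a_def b_def intro!: nn_integral_cong)
      finally show ?case using Suc.IH unfolding g_def
        by (meson add_left_mono order_trans)
    qed
    define S where "S n = {x \<in> space M. A \<le> q n x}" for n
    have Ssets[measurable]: "S n \<in> sets M" for n unfolding S_def by measurable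
    have Sbound: "measure M (S n) \<le> A powr (- c)" for n
    proof -
      have "ennreal (A powr c) * emeasure M (S n) = (\<integral>\<^sup>+ x. ennreal (A powr c) * indicator (S n) x \<partial>M)"
        by (simp add: nn_integral_cmult_indicator)
      also have "\<dots> \<le> (\<integral>\<^sup>+ x. ennreal (q n x powr c) \<partial>M)"
        using \<open>A > 0\<close> \<open>c \<ge> 0\<close>
        by (intro nn_integral_mono) (auto simp: S_def indicator_def intro!: ennreal_leI powr_mono2)
      also have "\<dots> \<le> 1" by (rule key)
      finally have "ennreal (A powr c) * ennreal (measure M (S n)) \<le> 1"
        by (simp add: P.emeasure_eq_measure)
      then have "A powr c * measure M (S n) \<le> 1"
        by (simp add: ennreal_mult''[symmetric])
      then show ?thesis using \<open>A > 0\<close>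
        by (simp add: powr_minus_divide field_simps)
    qed
    define E where "E n = {x \<in> space M. \<exists>j\<le>n. A \<le> (\<Prod>i\<in>{1..j}. real (Y i x))}" for n
    have pm[measurable]: "(\<lambda>x. \<Prod>i\<in>{1..j}. real (Y i x)) \<in> borel_measurable M" for j
      by (rule borel_measurable_prod) (use meas in measurable)
    have Esets: "E n \<in> sets M" for n
    proof -
      have "E n = (\<Union>j\<le>n. {x \<in> space M. A \<le> (\<Prod>i\<in>{1..j}. real (Y i x))})"
        by (auto simp: E_def)
      also have "\<dots> \<in> sets M"
        by (intro sets.finite_UN ballI borel_measurable_le pm) auto
      finally show ?thesis .
    qed
    have ES: "E n \<subseteq> S n" for n
      using Qf_ge[where n=n and A=A] by (auto simp: E_def S_def q_def Pf_def)
    have inc: "incseq E"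
      unfolding incseq_def E_def by (auto intro: le_trans)
    have seteq: "{x \<in> space M. sup_prod Y x \<ge> ennreal A} = (\<Union>n. E n)"
    proof safe
      fix x assume x: "x \<in> space M" "ennreal A \<le> sup_prod Y x"
      have c1: "real_of_int (\<lceil>A\<rceil> - 1) < A" using ceiling_correct[of A] by simp
      have "0 < \<lceil>A\<rceil>" using \<open>A > 0\<close> by simp
      then have c0: "0 \<le> real_of_int (\<lceil>A\<rceil> - 1)" by simp
      have "ennreal (real_of_int (\<lceil>A\<rceil> - 1)) < ennreal A"
        using c0 c1 ennreal_less_iff by blast
      also have "\<dots> \<le> sup_prod Y x" by fact
      finally obtain j where j: "ennreal (real_of_int (\<lceil>A\<rceil> - 1)) < ennreal (\<Prod>i\<in>{1..j}. real (Y i x))"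
        unfolding sup_prod_def less_SUP_iff by auto
      define k where "k = (\<Prod>i\<in>{1..j}. Y i x)"
      have pk: "(\<Prod>i\<in>{1..j}. real (Y i x)) = real k" by (simp add: k_def)
      have "real_of_int (\<lceil>A\<rceil> - 1) < real k"
        using j c0 ennreal_less_iff unfolding pk by blast
      then have "\<lceil>A\<rceil> - 1 < int k" by linarith
      then have "\<lceil>A\<rceil> \<le> int k" by simp
      then have "A \<le> real k" by (simp add: ceiling_le_iff)
      then have "A \<le> (\<Prod>i\<in>{1..j}. real (Y i x))" unfolding pk .
      then show "x \<in> (\<Union>n. E n)" using x by (auto simp: E_def)
    next
      fix x n assume "x \<in> E n"
      then obtain j where "x \<in> space M" "A \<le> (\<Prod>i\<in>{1..j}. real (Y i x))" by (auto simp: E_def)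
      then show "x \<in> space M" by simp
      have "ennreal A \<le> ennreal (\<Prod>i\<in>{1..j}. real (Y i x))" by (rule ennreal_leI) fact
      also have "\<dots> \<le> sup_prod Y x" unfolding sup_prod_def by (rule SUP_upper) simp
      finally show "ennreal A \<le> sup_prod Y x" .
    qed
    have "emeasure M (\<Union>n. E n) = (SUP n. emeasure M (E n))"
      by (rule SUP_emeasure_incseq[symmetric]) (use Esets inc in auto)
    also have "\<dots> \<le> ennreal (A powr (- c))"
    proof (rule SUP_least)
      fix n
      have "emeasure M (E n) \<le> emeasure M (S n)" by (rule emeasure_mono[OF ES Ssets])
      also have "\<dots> = ennreal (measure M (S n))" by (simp add: P.emeasure_eq_measure)
      also have "\<dots> \<le> ennreal (A powr (- c))" by (rule ennreal_leI[OF Sbound])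
      finally show "emeasure M (E n) \<le> ennreal (A powr (- c))" .
    qed
    finally have "ennreal (measure M (\<Union>n. E n)) \<le> ennreal (A powr (- c))"
      by (simp add: P.emeasure_eq_measure)
    then show ?thesis unfolding seteq by (simp add: ennreal_le_iff)
  qed
qed

end
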